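(* Fix a block $i\in\{1,\dots,N\}$, a battery state $\epsilon$ and a G-channel state $\gamma_G$. If $\gamma_H^-\le\gamma_H^+$ are H-channel states and the action $\alpha=1$ is optimal in block $i$ at state $\langle\epsilon,\gamma_G,\gamma_H^-\rangle$, then $\alpha=1$ is optimal in block $i$ at state $\langle\epsilon,\gamma_G,\gamma_H^+\rangle$. Equivalently, the optimal policy is monotone in $\gamma_H$: there is a threshold $\Gamma_{H,i}(\epsilon,\gamma_G)$ such that the EH-BS is assigned ($\alpha=1$) only when $\gamma_H\ge\Gamma_{H,i}(\epsilon,\gamma_G)$.
   Context: Finite-horizon MDP with $N$ blocks of length $\tau>0$. Parameters: $B_m>0$, positive integers $M,K$; channel levels $0<H_1<\dots<H_K$; $R,W,\sigma^2,g_0,\theta,d_G,d_H>0$; $p_G^{\max},p_H^{\max}>0$; weights $w_G,w_D>0$; $E_{H}$ a random variable with density $f_{E_H}$ on $[0,E_m]$. A state is $s=\langle\epsilon,\gamma_G,\gamma_H\rangle$ with $\epsilon\in\{(2m-1)B_m/(2M): m=1,\dots,M\}$ and $\gamma_G,\gamma_H\in\{H_1,\dots,H_K\}$. Let $p^{inv}_j(s)=(2^{R/(W\tau)}-1)\sigma^2(g_0 d_j^{-\theta}\gamma_j)^{-1}$ for $j\in\{G,H\}$, $\kappa=\min\{p_G^{\max},w_D(w_G\tau)^{-1}\}$, and $c(s)=w_D$ if $p^{inv}_G(s)>\kappa$, $c(s)=w_G p^{inv}_G(s)\tau$ otherwise. The allowable actions are $\mathcal{A}_s=\{0\}$ if $p^{inv}_H(s)>\min\{\epsilon/\tau,p_H^{\max}\}$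 and $\mathcal{A}_s=\{0,1\}$ otherwise; the cost is $c(s,\alpha)=(1-\alpha)c(s)$. Transitions: given $s$ and $\alpha$, the next channel states $\gamma_G',\gamma_H'$ are independent, each uniform on $\{H_1,\dots,H_K\}$, independent of the next energy state $\epsilon'=Q(\epsilon-\alpha p^{inv}_H(s)\tau+E_H)$, where $Q(\varepsilon)=\big(2\min\{\lfloor M\min\{\varepsilon,B_m\}/B_m\rfloor+1,M\}-1\big)B_m/(2M)$; denote the resulting transition probability $p(s'|s,\alpha)$. Optimal cost-to-go functions: $u_N^*(s)=\min_{\alpha\in\mathcal{A}_s}c(s,\alpha)$ and, for $i<N$, $u_i^*(s)=\min_{\alpha\in\mathcal{A}_s}\{c(s,\alpha)+\sum_{s'}p(s'|s,\alpha)u_{i+1}^*(s')\}$. Action $\alpha$ is optimal in block $i$ at state $s$ if $\alpha\in\mathcal{A}_s$ and it attains the minimum in the defining equation of $u_i^*(s)$. *)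

theory Defs
  imports "HOL-Analysis.Analysis"
begin

record mdp_params =
  pN :: nat            (* number of blocks *)
  ptau :: real         (* block length *)
  pBm :: real          (* battery capacity B_m *)
  pM :: nat            (* number of battery levels *)
  pK :: nat            (* number of channel levels *)
  pH :: "nat \<Rightarrow> real"
  pR :: real
  pW :: real
  psigma2 :: real
  pg0 :: real
  ptheta :: real
  pdG :: real
  pdH :: real
  ppGmax :: real
  ppHmax :: real
  pwG :: real
  pwD :: real
  pEm :: real
  pf :: "real \<Rightarrow> real"

definition valid_params :: "mdp_params \<Rightarrow> bool" where
  "valid_params P \<longleftrightarrow>
     pN P \<ge> 1 \<and> ptau P > 0 \<and> pBm P > 0 \<and> pM P \<ge> 1 \<and> pK P \<ge> 1 \<and>
     0 < pH P 1 \<and> (\<forall>k\<in>{1..pK P}. \<forall>l\<in>{1..pK P}. k < l \<longrightarrow> pH P k < pH P l) \<and>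
     pR P > 0 \<and> pW P > 0 \<and> psigma2 P > 0 \<and> pg0 P > 0 \<and> ptheta P > 0 \<and>
     pdG P > 0 \<and> pdH P > 0 \<and> ppGmax P > 0 \<and> ppHmax P > 0 \<and>
     pwG P > 0 \<and> pwD P > 0 \<and> pEm P > 0 \<and>
     pf P \<in> borel_measurable lborel \<and> (\<forall>t. 0 \<le> pf P t) \<and>
     (\<forall>t. t \<notin> {0..pEm P} \<longrightarrow> pf P t = 0) \<and>
     integrable lborel (pf P) \<and> integral\<^sup>L lborel (pf P) = 1"

type_synonym state = "real \<times> real \<times> real"  (* \<langle>\<epsilon>, \<gamma>_G, \<gamma>_H\<rangle> *)

definition energy_levels :: "mdp_params \<Rightarrow> real set" where
  "energy_levels P = {(2 * real m - 1) * pBm P / (2 * real (pM P)) | m. m \<in> {1..pM P}}"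

definition chan_levels :: "mdp_params \<Rightarrow> real set" where
  "chan_levels P = pH P ` {1..pK P}"

definition states :: "mdp_params \<Rightarrow> state set" where
  "states P = energy_levels P \<times> chan_levels P \<times> chan_levels P"

definition pinvG :: "mdp_params \<Rightarrow> state \<Rightarrow> real" where
  "pinvG P s = (case s of (e, gG, gH) \<Rightarrow>
     (2 powr (pR P / (pW P * ptau P)) - 1) * psigma2 P
       / (pg0 P * pdG P powr (- ptheta P) * gG))"

definition pinvH :: "mdp_params \<Rightarrow> state \<Rightarrow> real" where
  "pinvH P s = (case s of (e, gG, gH) \<Rightarrow>
     (2 powr (pR P / (pW P * ptau P)) - 1) * psigma2 P
       / (pg0 P * pdH P powr (- ptheta P) * gH))"

definition kappa :: "mdp_params \<Rightarrow> real" where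
  "kappa P = min (ppGmax P) (pwD P / (pwG P * ptau P))"

definition cbase :: "mdp_params \<Rightarrow> state \<Rightarrow> real" where
  "cbase P s = (if pinvG P s > kappa P then pwD P else pwG P * pinvG P s * ptau P)"

definition actions :: "mdp_params \<Rightarrow> state \<Rightarrow> nat set" where
  "actions P s = (case s of (e, gG, gH) \<Rightarrow>
     if pinvH P s > min (e / ptau P) (ppHmax P) then {0} else {0, 1})"

definition cost :: "mdp_params \<Rightarrow> state \<Rightarrow> nat \<Rightarrow> real" where
  "cost P s a = (1 - real a) * cbase P s"

definition Qz :: "mdp_params \<Rightarrow> real \<Rightarrow> real" where
  "Qz P x = (2 * of_int (min (\<lfloor>real (pM P) * min x (pBm P) / pBm P\<rfloor> + 1) (int (pM P))) - 1)
              * pBm P / (2 * real (pM P))"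

definition energy_prob :: "mdp_params \<Rightarrow> real \<Rightarrow> real \<Rightarrow> real" where
  "energy_prob P x e = (LINT t:{t. Qz P (x + t) = e}|lborel. pf P t)"

definition trans :: "mdp_params \<Rightarrow> state \<Rightarrow> nat \<Rightarrow> state \<Rightarrow> real" where
  "trans P s a s' = (case s of (e, gG, gH) \<Rightarrow> case s' of (e', gG', gH') \<Rightarrow>
     (1 / real (pK P)) * (1 / real (pK P))
       * energy_prob P (e - real a * pinvH P s * ptau P) e')"

text \<open>Vto P k s is the optimal cost-to-go with k blocks remaining after the current one,
  i.e. u_{N-k}^*(s).\<close>
fun Vto :: "mdp_params \<Rightarrow> nat \<Rightarrow> state \<Rightarrow> real" where
  "Vto P 0 s = Min ((\<lambda>a. cost P s a) ` actions P s)"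
| "Vto P (Suc k) s = Min ((\<lambda>a. cost P s a + (\<Sum>s'\<in>states P. trans P s a s' * Vto P k s'))
                          ` actions P s)"

definition u :: "mdp_params \<Rightarrow> nat \<Rightarrow> state \<Rightarrow> real" where
  "u P i s = Vto P (pN P - i) s"

definition qval :: "mdp_params \<Rightarrow> nat \<Rightarrow> state \<Rightarrow> nat \<Rightarrow> real" where
  "qval P i s a = (if i < pN P
     then cost P s a + (\<Sum>s'\<in>states P. trans P s a s' * u P (Suc i) s')
     else cost P s a)"

definition optimal :: "mdp_params \<Rightarrow> nat \<Rightarrow> state \<Rightarrow> nat \<Rightarrow> bool" where
  "optimal P i s a \<longleftrightarrow> a \<in> actions P s \<and> qval P i s a = u P i s"

end

theory Submission imports Defs begin

lemma Qz_meas: "(\<lambda>t. Qz P (x + t)) \<in> borel_measurable borel"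
  unfolding Qz_def by measurable

lemma Qz_set: "{t. Qz P (x + t) = e'} \<in> sets lborel"
proof -
  have "{t. Qz P (x + t) = e'} = (\<lambda>t. Qz P (x + t)) -` {e'} \<inter> space borel" by auto
  also have "\<dots> \<in> sets borel" using Qz_meas by (rule measurable_sets) simp
  finally show ?thesis by simp
qed

lemma Qz_mono:
  assumes "valid_params P" "z1 \<le> z2" shows "Qz P z1 \<le> Qz P z2"
proof -
  have B: "pBm P > 0" and M: "pM P \<ge> 1" using assms(1) unfolding valid_params_def by auto
  have "real (pM P) * min z1 (pBm P) / pBm P \<le> real (pM P) * min z2 (pBm P) / pBm P"
    using B assms(2) by (intro divide_right_mono mult_left_mono) auto
  hence "\<lfloor>real (pM P) * min z1 (pBm P) / pBm P\<rfloor> \<le> \<lfloor>real (pM P) * min z2 (pBm P) / pBm P\<rfloor>"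
    by (rule floor_mono)
  hence "min (\<lfloor>real (pM P) * min z1 (pBm P) / pBm P\<rfloor> + 1) (int (pM P)) \<le>
         min (\<lfloor>real (pM P) * min z2 (pBm P) / pBm P\<rfloor> + 1) (int (pM P))" by linarith
  hence "real_of_int (min (\<lfloor>real (pM P) * min z1 (pBm P) / pBm P\<rfloor> + 1) (int (pM P))) \<le>
         real_of_int (min (\<lfloor>real (pM P) * min z2 (pBm P) / pBm P\<rfloor> + 1) (int (pM P)))" by linarith
  thus ?thesis unfolding Qz_def using B M
    by (intro divide_right_mono mult_right_mono) auto
qed

lemma Qz_level:
  assumes "valid_params P" "0 \<le> z" shows "Qz P z \<in> energy_levels P"
proof -
  have B: "pBm P > 0" and M: "pM P \<ge> 1" using assms(1) unfolding valid_params_def by auto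
  define k where "k = min (\<lfloor>real (pM P) * min z (pBm P) / pBm P\<rfloor> + 1) (int (pM P))"
  have "0 \<le> real (pM P) * min z (pBm P) / pBm P" using B assms(2) by auto
  hence k1: "k \<ge> 1" unfolding k_def using M by auto
  have k2: "k \<le> int (pM P)" unfolding k_def by auto
  have "Qz P z = (2 * real (nat k) - 1) * pBm P / (2 * real (pM P))"
    unfolding Qz_def k_def[symmetric] using k1 by simp
  moreover have "nat k \<in> {1..pM P}" using k1 k2 by auto
  ultimately show ?thesis unfolding energy_levels_def by blast
qed

lemma finite_levels: "finite (energy_levels P)"
proof -
  have "energy_levels P = (\<lambda>m. (2 * real m - 1) * pBm P / (2 * real (pM P))) ` {1..pM P}"
    unfolding energy_levels_def by auto
  thus ?thesis by simp
qed

lemma levels_nonneg: "valid_params P \<Longrightarrow> e \<in> energy_levels P \<Longrightarrow> 0 \<le> e"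
  unfolding energy_levels_def valid_params_def by auto

lemma finite_chan: "finite (chan_levels P)" unfolding chan_levels_def by simp

lemma chan_pos: assumes "valid_params P" "g \<in> chan_levels P" shows "0 < g"
proof -
  obtain k where k: "k \<in> {1..pK P}" "g = pH P k" using assms(2) unfolding chan_levels_def by auto
  have "0 < pH P 1" and mono: "\<forall>k\<in>{1..pK P}. \<forall>l\<in>{1..pK P}. k < l \<longrightarrow> pH P k < pH P l"
    and "pK P \<ge> 1" using assms(1) unfolding valid_params_def by auto
  show ?thesis
  proof (cases "k = 1")
    case True thus ?thesis using k \<open>0 < pH P 1\<close> by simp
  next
    case False
    hence "pH P 1 < pH P k" using mono k \<open>pK P \<ge> 1\<close> by auto
    thus ?thesis using k \<open>0 < pH P 1\<close> by simp
  qed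
qed


lemma integ_piece: "valid_params P \<Longrightarrow>
  integrable lborel (\<lambda>t. indicator {t. Qz P (x + t) = e'} t * pf P t * c)"
proof -
  assume "valid_params P"
  hence "integrable lborel (pf P)" unfolding valid_params_def by auto
  hence "integrable lborel (\<lambda>t. pf P t * indicator {t. Qz P (x + t) = e'} t)"
    by (intro integrable_real_mult_indicator Qz_set)
  hence "integrable lborel (\<lambda>t. pf P t * indicator {t. Qz P (x + t) = e'} t * c)"
    by (rule integrable_mult_left)
  thus ?thesis by (simp add: mult_ac)
qed

lemma piece_eq: "energy_prob P x e' * c = integral\<^sup>L lborel (\<lambda>t. indicator {t. Qz P (x + t) = e'} t * pf P t * c)"
  unfolding energy_prob_def set_lebesgue_integral_def by simp

lemma pointwise:
  assumes "valid_params P" "0 \<le> x"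
  shows "(\<Sum>e'\<in>energy_levels P. indicator {t. Qz P (x + t) = e'} t * pf P t * W e') = pf P t * W (Qz P (x + t))"
proof (cases "pf P t = 0")
  case True thus ?thesis by simp
next
  case False
  hence "t \<in> {0..pEm P}" using assms(1) unfolding valid_params_def by auto
  hence "Qz P (x + t) \<in> energy_levels P" using assms by (intro Qz_level) auto
  have "(\<Sum>e'\<in>energy_levels P. indicator {t. Qz P (x + t) = e'} t * pf P t * W e')
      = (\<Sum>e'\<in>energy_levels P. if Qz P (x + t) = e' then pf P t * W e' else 0)"
    by (intro sum.cong) (auto simp: indicator_def)
  also have "\<dots> = pf P t * W (Qz P (x + t))"
    using \<open>Qz P (x + t) \<in> energy_levels P\<close> finite_levels by (simp add: sum.delta)
  finally show ?thesis .
qed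

lemma G_rep:
  assumes "valid_params P" "0 \<le> x"
  shows "(\<Sum>e'\<in>energy_levels P. energy_prob P x e' * W e') = integral\<^sup>L lborel (\<lambda>t. pf P t * W (Qz P (x + t)))"
    and "integrable lborel (\<lambda>t. pf P t * W (Qz P (x + t)))"
proof -
  have "(\<Sum>e'\<in>energy_levels P. energy_prob P x e' * W e') =
     (\<Sum>e'\<in>energy_levels P. integral\<^sup>L lborel (\<lambda>t. indicator {t. Qz P (x + t) = e'} t * pf P t * W e'))"
    by (simp add: piece_eq)
  also have "\<dots> = integral\<^sup>L lborel (\<lambda>t. \<Sum>e'\<in>energy_levels P. indicator {t. Qz P (x + t) = e'} t * pf P t * W e')"
    by (rule Bochner_Integration.integral_sum[where I="energy_levels P" and M=lborel and f="\<lambda>e' t. indicator {t. Qz P (x + t) = e'} t * pf P t * W e'", symmetric])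
       (use integ_piece assms in auto)
  also have "\<dots> = integral\<^sup>L lborel (\<lambda>t. pf P t * W (Qz P (x + t)))"
    using pointwise[OF assms] by simp
  finally show "(\<Sum>e'\<in>energy_levels P. energy_prob P x e' * W e') = integral\<^sup>L lborel (\<lambda>t. pf P t * W (Qz P (x + t)))" .
  have "integrable lborel (\<lambda>t. \<Sum>e'\<in>energy_levels P. indicator {t. Qz P (x + t) = e'} t * pf P t * W e')"
    by (rule Bochner_Integration.integrable_sum) (use integ_piece assms in auto)
  thus "integrable lborel (\<lambda>t. pf P t * W (Qz P (x + t)))"
    using pointwise[OF assms] by simp
qed

lemma G_mono:
  assumes "valid_params P" "0 \<le> x" "x \<le> y"
    and W: "\<And>a b. a \<in> energy_levels P \<Longrightarrow> b \<in> energy_levels P \<Longrightarrow> a \<le> b \<Longrightarrow> W b \<le> W a"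
  shows "(\<Sum>e'\<in>energy_levels P. energy_prob P y e' * W e') \<le> (\<Sum>e'\<in>energy_levels P. energy_prob P x e' * W e')"
proof -
  have y0: "0 \<le> y" using assms by linarith
  have "\<And>t. pf P t * W (Qz P (y + t)) \<le> pf P t * W (Qz P (x + t))"
  proof -
    fix t
    show "pf P t * W (Qz P (y + t)) \<le> pf P t * W (Qz P (x + t))"
    proof (cases "pf P t = 0")
      case True thus ?thesis by simp
    next
      case False
      hence t: "t \<in> {0..pEm P}" using assms(1) unfolding valid_params_def by auto
      have "W (Qz P (y + t)) \<le> W (Qz P (x + t))"
        using t assms by (intro W Qz_level Qz_mono) auto
      moreover have "0 \<le> pf P t" using assms(1) unfolding valid_params_def by auto
      ultimately show ?thesis by (rule mult_left_mono)
    qed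
  qed
  hence "integral\<^sup>L lborel (\<lambda>t. pf P t * W (Qz P (y + t))) \<le> integral\<^sup>L lborel (\<lambda>t. pf P t * W (Qz P (x + t)))"
    by (intro integral_mono G_rep(2) assms y0)
  thus ?thesis using G_rep(1)[OF assms(1,2)] G_rep(1)[OF assms(1) y0] by simp
qed


lemma trans_sum:
  "(\<Sum>s'\<in>states P. trans P (e, g, h) a s' * V s') =
   (\<Sum>e'\<in>energy_levels P. energy_prob P (e - real a * pinvH P (e, g, h) * ptau P) e' *
      (1 / real (pK P) * (1 / real (pK P)) * (\<Sum>g'\<in>chan_levels P. \<Sum>h'\<in>chan_levels P. V (e', g', h'))))"
proof -
  have "(\<Sum>s'\<in>states P. trans P (e, g, h) a s' * V s') =
    (\<Sum>e'\<in>energy_levels P. \<Sum>gh\<in>chan_levels P \<times> chan_levels P. trans P (e, g, h) a (e', gh) * V (e', gh))"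
    unfolding states_def by (rule sum.cartesian_product')
  also have "\<dots> = (\<Sum>e'\<in>energy_levels P. \<Sum>g'\<in>chan_levels P. \<Sum>h'\<in>chan_levels P. trans P (e, g, h) a (e', g', h') * V (e', g', h'))"
    by (simp add: sum.cartesian_product')
  also have "\<dots> = (\<Sum>e'\<in>energy_levels P. energy_prob P (e - real a * pinvH P (e, g, h) * ptau P) e' *
      (1 / real (pK P) * (1 / real (pK P)) * (\<Sum>g'\<in>chan_levels P. \<Sum>h'\<in>chan_levels P. V (e', g', h'))))"
    by (simp add: sum_distrib_left trans_def mult_ac)
  finally show ?thesis .
qed

lemma Min_act:
  "Min ((\<lambda>a. q a) ` actions P s) = (if 1 \<in> actions P s then min (q 0) (q 1) else q 0)"
  unfolding actions_def by (cases s) auto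

lemma act0: "0 \<in> actions P s" unfolding actions_def by (cases s) auto

lemma act1: "1 \<in> actions P (e, g, h) \<longleftrightarrow> pinvH P (e, g, h) \<le> min (e / ptau P) (ppHmax P)"
  unfolding actions_def by auto

lemma pinvH_e: "pinvH P (e, g, h) = pinvH P (e', g, h)" unfolding pinvH_def by simp
lemma cost_e: "cost P (e, g, h) a = cost P (e', g, h') a"
  unfolding cost_def cbase_def pinvG_def by simp

lemma Vto_mono:
  assumes vp: "valid_params P"
  shows "\<forall>g h e1 e2. 0 \<le> e1 \<longrightarrow> e1 \<le> e2 \<longrightarrow> Vto P k (e2, g, h) \<le> Vto P k (e1, g, h)"
proof (induction k)
  have tau: "ptau P > 0" using vp unfolding valid_params_def by auto
  case 0
  show ?case
  proof (intro allI impI)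
    fix g h e1 e2 :: real assume "0 \<le> e1" "e1 \<le> e2"
    have A: "1 \<in> actions P (e1, g, h) \<Longrightarrow> 1 \<in> actions P (e2, g, h)"
      unfolding act1 using pinvH_e[of P e1 g h e2] \<open>e1 \<le> e2\<close> tau
      using divide_right_mono[OF \<open>e1 \<le> e2\<close>, of "ptau P"] by auto
    show "Vto P 0 (e2, g, h) \<le> Vto P 0 (e1, g, h)"
      using A cost_e[of P e1 g h _ e2 h] by (simp add: Min_act)
  qed
next
  case (Suc k)
  have tau: "ptau P > 0" using vp unfolding valid_params_def by auto
  define W where "W e' = 1 / real (pK P) * (1 / real (pK P)) *
      (\<Sum>g'\<in>chan_levels P. \<Sum>h'\<in>chan_levels P. Vto P k (e', g', h'))" for e'
  have W: "W b \<le> W a" if "a \<in> energy_levels P" "b \<in> energy_levels P" "a \<le> b" for a b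
  proof -
    have "(\<Sum>g'\<in>chan_levels P. \<Sum>h'\<in>chan_levels P. Vto P k (b, g', h')) \<le>
          (\<Sum>g'\<in>chan_levels P. \<Sum>h'\<in>chan_levels P. Vto P k (a, g', h'))"
      using Suc.IH levels_nonneg[OF vp that(1)] that(3) by (intro sum_mono) auto
    thus ?thesis unfolding W_def by (intro mult_left_mono) auto
  qed
  show ?case
  proof (intro allI impI)
    fix g h e1 e2 :: real assume e1: "0 \<le> e1" and e12: "e1 \<le> e2"
    define q where "q e a = cost P (e, g, h) a +
        (\<Sum>e'\<in>energy_levels P. energy_prob P (e - real a * pinvH P (e, g, h) * ptau P) e' * W e')"
      for e a
    have V: "Vto P (Suc k) (e, g, h) = (if 1 \<in> actions P (e, g, h) then min (q e 0) (q e 1) else q e 0)" for e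
      unfolding Vto.simps trans_sum W_def[symmetric] q_def[symmetric]
      by (rule Min_act)
    have q0: "q e2 0 \<le> q e1 0"
      unfolding q_def using cost_e[of P e1 g h 0 e2 h]
      by (simp add: G_mono[OF vp e1 e12 W])
    show "Vto P (Suc k) (e2, g, h) \<le> Vto P (Suc k) (e1, g, h)"
    proof (cases "1 \<in> actions P (e1, g, h)")
      case True
      have A: "1 \<in> actions P (e2, g, h)"
        using True unfolding act1 using pinvH_e[of P e1 g h e2] e12 tau
        using divide_right_mono[OF e12, of "ptau P"] by auto
      have p: "pinvH P (e1, g, h) \<le> e1 / ptau P" using True unfolding act1 by auto
      hence x0: "0 \<le> e1 - pinvH P (e1, g, h) * ptau P" using tau by (simp add: field_simps)
      have q1: "q e2 1 \<le> q e1 1"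
        unfolding q_def using cost_e[of P e1 g h 1 e2 h] pinvH_e[of P e1 g h e2]
        using G_mono[OF vp x0 _ W, of "e2 - pinvH P (e1, g, h) * ptau P"] e12 by simp
      have "min (q e2 0) (q e2 1) \<le> min (q e1 0) (q e1 1)" using q0 q1 by (rule min.mono)
      thus ?thesis unfolding V[of e1] V[of e2] using A True by simp
    next
      case False
      have "Vto P (Suc k) (e2, g, h) \<le> q e2 0" unfolding V[of e2] by auto
      thus ?thesis using V[of e1] False q0 by simp
    qed
  qed
qed

lemma u_Min:
  assumes "i \<le> pN P"
  shows "u P i s = Min ((\<lambda>a. qval P i s a) ` actions P s)"
proof (cases "i < pN P")
  case True
  hence "pN P - i = Suc (pN P - Suc i)" by simp
  thus ?thesis unfolding u_def qval_def using True by simp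
next
  case False
  hence "pN P - i = 0" "\<not> i < pN P" using assms by auto
  thus ?thesis unfolding u_def qval_def by simp
qed


theorem proposition3:
  fixes P :: mdp_params and i :: nat and e gG gHm gHp :: real
  assumes "valid_params P"
    and "i \<in> {1..pN P}"
    and "e \<in> energy_levels P"
    and "gG \<in> chan_levels P"
    and "gHm \<in> chan_levels P" and "gHp \<in> chan_levels P"
    and "gHm \<le> gHp"
    and "optimal P i (e, gG, gHm) 1"
  shows "optimal P i (e, gG, gHp) 1"
proof -
  note vp = assms(1)
  have tau: "ptau P > 0" and R: "pR P > 0" "pW P > 0" "psigma2 P > 0" "pg0 P > 0" "pdH P > 0"
    using vp unfolding valid_params_def by auto
  have iN: "i \<le> pN P" using assms(2) by auto
  have gm: "0 < gHm" using chan_pos[OF vp assms(5)] .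
  have A1m: "1 \<in> actions P (e, gG, gHm)" and qm: "qval P i (e, gG, gHm) 1 = u P i (e, gG, gHm)"
    using assms(8) unfolding optimal_def by auto
  define C where "C = (2 powr (pR P / (pW P * ptau P)) - 1) * psigma2 P"
  define D where "D = pg0 P * pdH P powr (- ptheta P)"
  have "1 < 2 powr (pR P / (pW P * ptau P))" using powr_less_mono[of 0 "pR P / (pW P * ptau P)" 2] R tau by simp
  hence C0: "C > 0" unfolding C_def using R by auto
  have D0: "D > 0" unfolding D_def using R by auto
  have pH: "pinvH P (e, gG, h) = C / (D * h)" for h unfolding pinvH_def C_def D_def by (simp add: mult_ac)
  have ple: "pinvH P (e, gG, gHp) \<le> pinvH P (e, gG, gHm)"
    unfolding pH using C0 D0 gm assms(7) by (intro divide_left_mono mult_left_mono mult_pos_pos) auto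
  have A1p: "1 \<in> actions P (e, gG, gHp)"
    using A1m ple unfolding act1 by (auto simp: pinvH_e)
  have cst: "cost P (e, gG, gHp) a = cost P (e, gG, gHm) a" for a by (rule cost_e)
  have q0: "qval P i (e, gG, gHp) 0 = qval P i (e, gG, gHm) 0"
    unfolding qval_def trans_def cst by simp
  have q1: "qval P i (e, gG, gHp) 1 \<le> qval P i (e, gG, gHm) 1"
  proof (cases "i < pN P")
    case False thus ?thesis unfolding qval_def cst by simp
  next
    case True
    define W where "W e' = 1 / real (pK P) * (1 / real (pK P)) *
      (\<Sum>g'\<in>chan_levels P. \<Sum>h'\<in>chan_levels P. u P (Suc i) (e', g', h'))" for e'
    have W: "W b \<le> W a" if "a \<in> energy_levels P" "b \<in> energy_levels P" "a \<le> b" for a b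
    proof -
      have "(\<Sum>g'\<in>chan_levels P. \<Sum>h'\<in>chan_levels P. u P (Suc i) (b, g', h')) \<le>
            (\<Sum>g'\<in>chan_levels P. \<Sum>h'\<in>chan_levels P. u P (Suc i) (a, g', h'))"
        unfolding u_def using Vto_mono[OF vp] levels_nonneg[OF vp that(1)] that(3) by (intro sum_mono) auto
      thus ?thesis unfolding W_def by (intro mult_left_mono) auto
    qed
    have p: "pinvH P (e, gG, gHm) \<le> e / ptau P" using A1m unfolding act1 by auto
    hence x0: "0 \<le> e - pinvH P (e, gG, gHm) * ptau P" using tau by (simp add: field_simps)
    have "e - pinvH P (e, gG, gHm) * ptau P \<le> e - pinvH P (e, gG, gHp) * ptau P"
      using ple tau by (simp add: mult_right_mono)
    from G_mono[OF vp x0 this W] show ?thesis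
      unfolding qval_def cst using True by (simp add: trans_sum W_def)
  qed
  have um: "u P i (e, gG, gHm) = min (qval P i (e, gG, gHm) 0) (qval P i (e, gG, gHm) 1)"
    using u_Min[OF iN] A1m by (simp add: Min_act)
  have up: "u P i (e, gG, gHp) = min (qval P i (e, gG, gHp) 0) (qval P i (e, gG, gHp) 1)"
    using u_Min[OF iN] A1p by (simp add: Min_act)
  have "qval P i (e, gG, gHp) 1 = u P i (e, gG, gHp)"
    using um up qm q0 q1 by (simp add: min_def split: if_splits)
  thus ?thesis unfolding optimal_def using A1p by simp
qed

end
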